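(* In the setting described in the context, $\sup_{t\ge0}E\lVert\hat{x}(t)\rVert^2<\infty$.
   Context: Setting. $S$ is a compact metric space; $h:\mathbb{R}^d\times S\to\mathbb{R}^d$ is jointly continuous and there is $L>0$ with $\lVert h(x_1,y)-h(x_2,y)\rVert\le L\lVert x_1-x_2\rVert$ for all $x_1,x_2,y$. Step sizes $a(n)>0$ satisfy $\sum_n a(n)=\infty$, $\sum_n a(n)^2<\infty$, $\sup_n a(n)\le1$. On a probability space with filtration $\{\mathcal{F}_n\}$, $\{y_n\}_{n\ge0}$ is an $S$-valued adapted process, $x_0$ is $\mathcal{F}_0$-measurable, $\{M_n\}_{n\ge1}$ is a square-integrable martingale difference sequence ($M_{n+1}$ is $\mathcal{F}_{n+1}$-measurable, $E[M_{n+1}\mid\mathcal{F}_n]=0$) with $E[\lVert M_{n+1}\rVert^2\mid\mathcal{F}_n]\le K(1+\lVert x_n\rVert^2)$ for some constant $K>0$, and $x_{n+1}=x_n+a(n)[h(x_n,y_n)+M_{n+1}]$. For $c\ge1$, $h_c(x,y):=h(cx,y)/c$. Rescaled trajectory. Fix $T>0$. Let $t(0)=0$, $t(n)=\sum_{i=0}^{n-1}a(i)$; let $\bar x$ be the piecewise linear interpolation with $\bar x(t(n))=x_n$, linear on each $[t(n),t(n+1)]$. Let $T_0=0$, $T_n=\min\{t(m):t(m)\ge T_{n-1}+T\}$, and $m(n)$ the index with $t(m(n))=T_n$. Let $r(n)=\lVert\bar x(T_n)\rVert\vee1$ and, for $t\in[T_n,T_{n+1})$, $\hat x(t)=\bar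 x(t)/r(n)$; let $\hat M_{k+1}=M_{k+1}/r(n)$ when $t(k)\in[T_n,T_{n+1})$. *)

theory Defs
  imports "HOL-Probability.Probability"
begin

definition sa_time :: "(nat \<Rightarrow> real) \<Rightarrow> nat \<Rightarrow> real" where
  "sa_time a n = (\<Sum>i<n. a i)"

definition sa_idx :: "(nat \<Rightarrow> real) \<Rightarrow> real \<Rightarrow> nat" where
  "sa_idx a t = (THE n. sa_time a n \<le> t \<and> t < sa_time a (Suc n))"

definition sa_xbar :: "(nat \<Rightarrow> real) \<Rightarrow> (nat \<Rightarrow> 'w \<Rightarrow> 'd::real_vector) \<Rightarrow> real \<Rightarrow> 'w \<Rightarrow> 'd" where
  "sa_xbar a x t \<omega> =
     (let n = sa_idx a t in
        x n \<omega> + ((t - sa_time a n) / a n) *\<^sub>R (x (Suc n) \<omega> - x n \<omega>))"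

fun sa_T :: "(nat \<Rightarrow> real) \<Rightarrow> real \<Rightarrow> nat \<Rightarrow> real" where
  "sa_T a T 0 = 0"
| "sa_T a T (Suc n) = sa_time a (LEAST m. sa_time a m \<ge> sa_T a T n + T)"

definition sa_r :: "(nat \<Rightarrow> real) \<Rightarrow> real \<Rightarrow> (nat \<Rightarrow> 'w \<Rightarrow> 'd::real_normed_vector) \<Rightarrow> nat \<Rightarrow> 'w \<Rightarrow> real" where
  "sa_r a T x n \<omega> = max (norm (sa_xbar a x (sa_T a T n) \<omega>)) 1"

definition sa_block :: "(nat \<Rightarrow> real) \<Rightarrow> real \<Rightarrow> real \<Rightarrow> nat" where
  "sa_block a T t = (THE n. sa_T a T n \<le> t \<and> t < sa_T a T (Suc n))"

definition sa_xhat :: "(nat \<Rightarrow> real) \<Rightarrow> real \<Rightarrow> (nat \<Rightarrow> 'w \<Rightarrow> 'd::real_normed_vector) \<Rightarrow> real \<Rightarrow> 'w \<Rightarrow> 'd" where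
  "sa_xhat a T x t \<omega> = (1 / sa_r a T x (sa_block a T t) \<omega>) *\<^sub>R sa_xbar a x t \<omega>"

end

theory Submission
  imports Defs
begin


lemma meas_h_comp:
  fixes h :: "'d::euclidean_space \<Rightarrow> 's::metric_space \<Rightarrow> 'd"
  assumes h_cont: "continuous_on (UNIV \<times> S) (\<lambda>(u, v). h u v)"
    and h_lip: "\<And>x1 x2 v. v \<in> S \<Longrightarrow> norm (h x1 v - h x2 v) \<le> L * norm (x1 - x2)"
    and X: "X \<in> borel_measurable N" and Y: "Y \<in> borel_measurable N"
    and YS: "\<And>\<omega>. \<omega> \<in> space N \<Longrightarrow> Y \<omega> \<in> S"
  shows "(\<lambda>\<omega>. h (X \<omega>) (Y \<omega>)) \<in> borel_measurable N"
proof -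
  define q :: "nat \<Rightarrow> 'd \<Rightarrow> 'd" where
    "q k u = (\<Sum>i\<in>Basis. (real_of_int \<lfloor>(real k + 1) * (u \<bullet> i)\<rfloor> / (real k + 1)) *\<^sub>R i)" for k u
  have Ym: "Y \<in> measurable N (restrict_space borel S)"
    using YS Y by (intro measurable_restrict_space2) auto
  have hg: "(\<lambda>\<omega>. h g (Y \<omega>)) \<in> borel_measurable N" for g
  proof -
    have "continuous_on S (h g)"
    proof -
      have "continuous_on S ((\<lambda>(u, v). h u v) \<circ> (\<lambda>v. (g, v)))"
        by (rule continuous_on_compose[OF _ continuous_on_subset[OF h_cont]])
           (auto intro!: continuous_intros)
      then show ?thesis by (simp add: o_def)
    qed
    from measurable_comp[OF Ym borel_measurable_continuous_on_restrict[OF this]]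
    show ?thesis by (simp add: o_def)
  qed
  have qm: "q k \<in> borel_measurable borel" for k
    unfolding q_def by measurable
  have qX: "(\<lambda>\<omega>. q k (X \<omega>)) \<in> borel_measurable N" for k
    using measurable_comp[OF X qm] by (simp add: o_def)
  have rng: "countable (range (q k))" for k
  proof -
    have "range (q k) \<subseteq> (\<lambda>f. \<Sum>i\<in>Basis. (real_of_int (f i) / (real k + 1)) *\<^sub>R i) ` (Basis \<rightarrow>\<^sub>E (UNIV::int set))"
    proof
      fix z assume "z \<in> range (q k)"
      then obtain u where z: "z = q k u" by auto
      show "z \<in> (\<lambda>f. \<Sum>i\<in>Basis. (real_of_int (f i) / (real k + 1)) *\<^sub>R i) ` (Basis \<rightarrow>\<^sub>E (UNIV::int set))"
        by (rule image_eqI[where x="restrict (\<lambda>i. \<lfloor>(real k + 1) * (u \<bullet> i)\<rfloor>) Basis"])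
           (auto simp: z q_def intro!: sum.cong)
    qed
    moreover have "countable (Basis \<rightarrow>\<^sub>E (UNIV::int set))"
      by (rule countable_PiE) auto
    ultimately show ?thesis by (blast intro: countable_image countable_subset)
  qed
  have hq: "(\<lambda>\<omega>. h (q k (X \<omega>)) (Y \<omega>)) \<in> borel_measurable N" for k
  proof (rule measurable_piecewise_restrict[where C="(\<lambda>g. {\<omega>. q k (X \<omega>) = g}) ` range (q k)"])
    show "countable ((\<lambda>g. {\<omega>. q k (X \<omega>) = g}) ` range (q k))" using rng by auto
  next
    fix \<Omega> assume "\<Omega> \<in> (\<lambda>g. {\<omega>. q k (X \<omega>) = g}) ` range (q k)"
    then obtain g where \<Omega>: "\<Omega> = {\<omega>. q k (X \<omega>) = g}" by auto
    have "\<Omega> \<inter> space N = {\<omega> \<in> space N. q k (X \<omega>) = g}" using \<Omega> by auto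
    also have "\<dots> \<in> sets N" using qX[of k] by measurable
    finally show "\<Omega> \<inter> space N \<in> sets N" .
    have "(\<lambda>\<omega>. h g (Y \<omega>)) \<in> borel_measurable (restrict_space N \<Omega>)"
      by (rule measurable_restrict_space1[OF hg])
    then show "(\<lambda>\<omega>. h (q k (X \<omega>)) (Y \<omega>)) \<in> borel_measurable (restrict_space N \<Omega>)"
      by (rule measurable_cong[THEN iffD1, rotated]) (auto simp: \<Omega> space_restrict_space)
  next
    show "space N \<subseteq> \<Union> ((\<lambda>g. {\<omega>. q k (X \<omega>) = g}) ` range (q k))" by auto
  qed
  have qconv: "(\<lambda>k. q k u) \<longlonglongrightarrow> u" for u
  proof -
    have "(\<lambda>k. q k u) = (\<lambda>k. \<Sum>i\<in>Basis. (real_of_int \<lfloor>(real k + 1) * (u \<bullet> i)\<rfloor> / (real k + 1)) *\<^sub>R i)"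
      by (simp add: q_def fun_eq_iff)
    moreover have "(\<lambda>k. \<Sum>i\<in>Basis. (real_of_int \<lfloor>(real k + 1) * (u \<bullet> i)\<rfloor> / (real k + 1)) *\<^sub>R i)
        \<longlonglongrightarrow> (\<Sum>i\<in>Basis. (u \<bullet> i) *\<^sub>R i)"
    proof (intro tendsto_sum tendsto_scaleR tendsto_const)
      fix i :: 'd
      let ?c = "u \<bullet> i"
      have lo: "?c - 1 / (real k + 1) \<le> real_of_int \<lfloor>(real k + 1) * ?c\<rfloor> / (real k + 1)" for k
      proof -
        have "(real k + 1) * ?c - 1 \<le> real_of_int \<lfloor>(real k + 1) * ?c\<rfloor>"
          by linarith
        then have "((real k + 1) * ?c - 1) / (real k + 1) \<le> real_of_int \<lfloor>(real k + 1) * ?c\<rfloor> / (real k + 1)"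
          by (intro divide_right_mono) auto
        moreover have "((real k + 1) * ?c - 1) / (real k + 1) = ?c - 1 / (real k + 1)"
          by (simp add: field_simps)
        ultimately show ?thesis by simp
      qed
      have up: "real_of_int \<lfloor>(real k + 1) * ?c\<rfloor> / (real k + 1) \<le> ?c" for k
      proof -
        have "real_of_int \<lfloor>(real k + 1) * ?c\<rfloor> \<le> (real k + 1) * ?c" by linarith
        then show ?thesis by (simp add: field_simps)
      qed
      have l1: "(\<lambda>k. ?c - 1 / (real k + 1)) \<longlonglongrightarrow> ?c - 0"
      proof -
        have "(\<lambda>k. 1 / (real k + 1)) \<longlonglongrightarrow> 0"
          using LIMSEQ_inverse_real_of_nat by (simp add: inverse_eq_divide add.commute)
        then show ?thesis by (intro tendsto_intros)
      qed
      show "(\<lambda>k. real_of_int \<lfloor>(real k + 1) * ?c\<rfloor> / (real k + 1)) \<longlonglongrightarrow> ?c"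
        by (rule tendsto_sandwich[OF _ _ l1[simplified] tendsto_const]) (use lo up in auto)
    qed
    ultimately show ?thesis by (simp add: euclidean_representation)
  qed
  show ?thesis
  proof (rule borel_measurable_LIMSEQ_metric[OF hq])
    fix \<omega> assume "\<omega> \<in> space N"
    then have yS: "Y \<omega> \<in> S" by (rule YS)
    have "(\<lambda>k. norm (h (q k (X \<omega>)) (Y \<omega>) - h (X \<omega>) (Y \<omega>))) \<longlonglongrightarrow> 0"
    proof (rule tendsto_sandwich[where f="\<lambda>_. 0" and h="\<lambda>k. L * norm (q k (X \<omega>) - X \<omega>)"])
      show "\<forall>\<^sub>F k in sequentially. 0 \<le> norm (h (q k (X \<omega>)) (Y \<omega>) - h (X \<omega>) (Y \<omega>))" by simp
      show "\<forall>\<^sub>F k in sequentially. norm (h (q k (X \<omega>)) (Y \<omega>) - h (X \<omega>) (Y \<omega>)) \<le> L * norm (q k (X \<omega>) - X \<omega>)"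
        using h_lip[OF yS] by simp
      have "(\<lambda>k. norm (q k (X \<omega>) - X \<omega>)) \<longlonglongrightarrow> 0"
        using qconv[of "X \<omega>"] by (simp add: tendsto_iff dist_norm)
      then show "(\<lambda>k. L * norm (q k (X \<omega>) - X \<omega>)) \<longlonglongrightarrow> 0"
        using tendsto_mult_right_zero by blast
    qed simp
    then show "(\<lambda>k. h (q k (X \<omega>)) (Y \<omega>)) \<longlonglongrightarrow> h (X \<omega>) (Y \<omega>)"
      by (simp add: tendsto_iff dist_norm)
  qed
qed



lemma interval_unique:
  fixes f :: "nat \<Rightarrow> real"
  assumes sm: "strict_mono f" and t0: "f 0 \<le> t" and unb: "\<And>B. \<exists>n. B \<le> f n"
  shows "\<exists>!n. f n \<le> t \<and> t < f (Suc n)"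
proof -
  obtain N where N0: "t + 1 \<le> f N" using unb[of "t + 1"] by blast
  then have N: "t < f N" by simp
  define K where "K = (LEAST n. t < f n)"
  have K1: "t < f K" unfolding K_def by (rule LeastI[of _ N]) (rule N)
  have K0: "K \<noteq> 0" proof assume "K = 0" then show False using K1 t0 by simp qed
  then obtain n where Kn: "K = Suc n" by (cases K) auto
  have "\<not> t < f n" unfolding K_def[symmetric]
    using not_less_Least[of n "\<lambda>n. t < f n"] Kn K_def by auto
  then have ex: "f n \<le> t \<and> t < f (Suc n)" using K1 Kn by auto
  show ?thesis
  proof (rule ex1I[of _ n])
    show "f n \<le> t \<and> t < f (Suc n)" by (rule ex)
  next
    fix m assume m: "f m \<le> t \<and> t < f (Suc m)"
    show "m = n"
    proof (rule ccontr)
      assume "m \<noteq> n"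
      then consider "m < n" | "n < m" by linarith
      then show False
      proof cases
        case 1
        then have "f (Suc m) \<le> f n" using sm by (simp add: strict_mono_less_eq Suc_leI)
        then show False using m ex by auto
      next
        case 2
        then have "f (Suc n) \<le> f m" using sm by (simp add: strict_mono_less_eq Suc_leI)
        then show False using m ex by auto
      qed
    qed
  qed
qed

lemma sa_time_0[simp]: "sa_time a 0 = 0" by (simp add: sa_time_def)
lemma sa_time_Suc: "sa_time a (Suc n) = sa_time a n + a n" by (simp add: sa_time_def)

lemma sa_time_mono:
  assumes "\<And>n. a n > 0" shows "strict_mono (sa_time a)"
  by (rule strict_mono_Suc_iff[THEN iffD2]) (simp add: sa_time_Suc assms)

lemma sa_time_unb:
  assumes "\<And>n. a n > 0" "\<not> summable a" shows "\<exists>n. B \<le> sa_time a n"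
proof (rule ccontr)
  assume "\<not> (\<exists>n. B \<le> sa_time a n)"
  then have "\<And>n. (\<Sum>i<n. a i) \<le> B" by (auto simp: sa_time_def not_le less_imp_le)
  then have "summable a" using assms(1) less_imp_le by (intro summableI_nonneg_bounded) auto
  then show False using assms(2) by auto
qed

lemma sa_time_nonneg: assumes "\<And>n. a n > 0" shows "0 \<le> sa_time a n"
  unfolding sa_time_def by (intro sum_nonneg) (use assms less_imp_le in auto)

lemma sa_idx:
  assumes "\<And>n. a n > 0" "\<not> summable a" "0 \<le> t"
  shows "sa_time a (sa_idx a t) \<le> t \<and> t < sa_time a (Suc (sa_idx a t))"
proof -
  have "\<exists>!n. sa_time a n \<le> t \<and> t < sa_time a (Suc n)"
    by (rule interval_unique[OF sa_time_mono[OF assms(1)]]) (use assms sa_time_unb in auto)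
  then show ?thesis unfolding sa_idx_def by (rule theI')
qed

lemma sa_idx_time:
  assumes "\<And>n. a n > 0" shows "sa_idx a (sa_time a m) = m"
  unfolding sa_idx_def
proof (rule the_equality)
  show "sa_time a m \<le> sa_time a m \<and> sa_time a m < sa_time a (Suc m)"
    using assms by (simp add: sa_time_Suc)
next
  fix n assume n: "sa_time a n \<le> sa_time a m \<and> sa_time a m < sa_time a (Suc n)"
  have sm: "strict_mono (sa_time a)" by (rule sa_time_mono[OF assms])
  have "n \<le> m" using n sm by (simp add: strict_mono_less_eq)
  moreover have "m < Suc n" using n sm by (simp add: strict_mono_less)
  ultimately show "n = m" by simp
qed

lemma sa_xbar_time:
  assumes "\<And>n. a n > 0" shows "sa_xbar a x (sa_time a m) \<omega> = x m \<omega>"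
  by (simp add: sa_xbar_def sa_idx_time[OF assms] Let_def)

lemma sa_T_props:
  assumes apos: "\<And>n. a n > 0" and ns: "\<not> summable a" and a1: "\<And>n. a n \<le> 1" and Tpos: "T > 0"
  obtains mm where "\<And>n. sa_T a T n = sa_time a (mm n)"
    and "\<And>n. sa_T a T n + T \<le> sa_T a T (Suc n)"
    and "\<And>n. sa_T a T (Suc n) \<le> sa_T a T n + T + 1"
proof -
  define mm where "mm n = (case n of 0 \<Rightarrow> 0 | Suc k \<Rightarrow> (LEAST m. sa_time a m \<ge> sa_T a T k + T))" for n
  have e: "sa_T a T n = sa_time a (mm n)" for n
    by (cases n) (auto simp: mm_def)
  have ge: "sa_T a T n + T \<le> sa_T a T (Suc n)" for n
  proof -
    obtain N where "sa_T a T n + T \<le> sa_time a N" using sa_time_unb[OF apos ns] by blast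
    then show ?thesis by (simp add: LeastI[where P="\<lambda>m. sa_T a T n + T \<le> sa_time a m"])
  qed
  have nn: "0 \<le> sa_T a T n" for n using e sa_time_nonneg[OF apos] by simp
  have le: "sa_T a T (Suc n) \<le> sa_T a T n + T + 1" for n
  proof -
    define K where "K = (LEAST m. sa_time a m \<ge> sa_T a T n + T)"
    have K0: "K \<noteq> 0"
    proof
      assume "K = 0"
      then have "sa_time a K = 0" by simp
      moreover obtain N where "sa_T a T n + T \<le> sa_time a N" using sa_time_unb[OF apos ns] by blast
      then have "sa_T a T n + T \<le> sa_time a K" unfolding K_def by (rule LeastI)
      ultimately show False using nn[of n] Tpos by simp
    qed
    then obtain j where Kj: "K = Suc j" by (cases K) auto
    have "\<not> sa_time a j \<ge> sa_T a T n + T"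
      using not_less_Least[of j "\<lambda>m. sa_time a m \<ge> sa_T a T n + T"] Kj K_def by auto
    then have "sa_time a K \<le> sa_T a T n + T + 1" using Kj a1[of j] by (simp add: sa_time_Suc)
    then show ?thesis by (simp add: K_def)
  qed
  show ?thesis by (rule that[OF e ge le])
qed

lemma sa_block:
  assumes apos: "\<And>n. a n > 0" and ns: "\<not> summable a" and a1: "\<And>n. a n \<le> 1" and Tpos: "T > 0"
    and t: "0 \<le> t"
  shows "sa_T a T (sa_block a T t) \<le> t \<and> t < sa_T a T (Suc (sa_block a T t))"
proof -
  obtain mm where e: "\<And>n. sa_T a T n = sa_time a (mm n)"
    and ge: "\<And>n. sa_T a T n + T \<le> sa_T a T (Suc n)"
    using sa_T_props[OF apos ns a1 Tpos] by metis
  have sm: "strict_mono (sa_T a T)"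
    by (rule strict_mono_Suc_iff[THEN iffD2]) (use ge Tpos in \<open>smt (verit)\<close>)
  have lin: "real n * T \<le> sa_T a T n" for n
  proof (induction n)
    case (Suc n) then show ?case using ge[of n] by (simp add: algebra_simps)
  qed simp
  have unb: "\<exists>n. B \<le> sa_T a T n" for B
  proof -
    obtain n where "B / T \<le> real n" using real_arch_simple by blast
    then have "B \<le> real n * T" using Tpos by (simp add: field_simps)
    then show ?thesis using lin by (meson order_trans)
  qed
  have "\<exists>!n. sa_T a T n \<le> t \<and> t < sa_T a T (Suc n)"
    by (rule interval_unique[OF sm]) (use t unb in auto)
  then show ?thesis unfolding sa_block_def by (rule theI')
qed



lemma noise_bound:
  fixes Z V g :: "'w \<Rightarrow> real"
  assumes P: "prob_space M" and sub: "subalgebra M G"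
    and gm: "g \<in> borel_measurable G" and g01: "\<And>\<omega>. \<omega> \<in> space M \<Longrightarrow> 0 \<le> g \<omega> \<and> g \<omega> \<le> 1"
    and Zm: "Z \<in> borel_measurable M" and Z0: "\<And>\<omega>. 0 \<le> Z \<omega>" and Zi: "integrable M Z"
    and Vm: "V \<in> borel_measurable M"
    and ce: "AE \<omega> in M. real_cond_exp M G Z \<omega> \<le> V \<omega>"
  shows "(\<integral>\<^sup>+\<omega>. ennreal (g \<omega> * Z \<omega>) \<partial>M) \<le> (\<integral>\<^sup>+\<omega>. ennreal (g \<omega> * V \<omega>) \<partial>M)"
proof -
  interpret prob_space M by (rule P)
  interpret finite_measure_subalgebra M G
    by unfold_locales (rule sub)
  have gM: "g \<in> borel_measurable M" by (rule measurable_from_subalg[OF sub gm])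
  have iZ: "integrable M (\<lambda>\<omega>. g \<omega> * Z \<omega>)"
    by (rule Bochner_Integration.integrable_bound[OF Zi]) (use gM Zm g01 Z0 in \<open>auto intro!: mult_left_le_one_le simp: abs_mult\<close>)
  have ci: "integrable M (\<lambda>\<omega>. g \<omega> * real_cond_exp M G Z \<omega>)"
    and ceq: "(\<integral>\<omega>. g \<omega> * real_cond_exp M G Z \<omega> \<partial>M) = (\<integral>\<omega>. g \<omega> * Z \<omega> \<partial>M)"
    using real_cond_exp_intg[OF iZ gm Zm] by auto
  have cpos: "AE \<omega> in M. 0 \<le> real_cond_exp M G Z \<omega>"
    by (rule real_cond_exp_pos) (use Z0 Zm in auto)
  have "(\<integral>\<^sup>+\<omega>. ennreal (g \<omega> * Z \<omega>) \<partial>M) = ennreal (\<integral>\<omega>. g \<omega> * Z \<omega> \<partial>M)"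
    by (rule nn_integral_eq_integral[OF iZ]) (use g01 Z0 in auto)
  also have "\<dots> = ennreal (\<integral>\<omega>. g \<omega> * real_cond_exp M G Z \<omega> \<partial>M)" by (simp add: ceq)
  also have "\<dots> = (\<integral>\<^sup>+\<omega>. ennreal (g \<omega> * real_cond_exp M G Z \<omega>) \<partial>M)"
    by (rule nn_integral_eq_integral[OF ci, symmetric]) (use cpos g01 in auto)
  also have "\<dots> \<le> (\<integral>\<^sup>+\<omega>. ennreal (g \<omega> * V \<omega>) \<partial>M)"
  proof (rule nn_integral_mono_AE)
    show "AE \<omega> in M. ennreal (g \<omega> * real_cond_exp M G Z \<omega>) \<le> ennreal (g \<omega> * V \<omega>)"
      using ce AE_space
    proof eventually_elim
      case (elim \<omega>)
      then have "g \<omega> * real_cond_exp M G Z \<omega> \<le> g \<omega> * V \<omega>"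
        using g01 by (intro mult_left_mono) auto
      then show ?case by (rule ennreal_leI)
    qed
  qed
  finally show ?thesis .
qed


lemma real_step:
  fixes \<alpha> L H n k W Q :: real
  assumes a0: "0 < \<alpha>" and a1: "\<alpha> \<le> 1" and L: "0 < L" and H: "0 \<le> H" and n: "0 \<le> n" and k: "0 \<le> k"
    and W0: "0 \<le> W" and W: "W \<le> (1 + \<alpha> * L) * n + \<alpha> * H" and Q0: "0 \<le> Q" and Q: "Q \<le> W + \<alpha> * k"
  shows "Q\<^sup>2 \<le> (1 + (1 + 2 * (2*L + L\<^sup>2 + (1+L)*H + H\<^sup>2)) * \<alpha>) * n\<^sup>2
               + (1 + 2 * (2*L + L\<^sup>2 + (1+L)*H + H\<^sup>2)) * \<alpha> + 2 * \<alpha> * k\<^sup>2"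
proof -
  define c1 where "c1 = 2*L + L\<^sup>2 + (1+L)*H + H\<^sup>2"
  have c1: "0 \<le> c1" unfolding c1_def using L H by auto
  have "Q\<^sup>2 \<le> (W + \<alpha> * k)\<^sup>2" using Q Q0 by (intro power_mono) auto
  also have "\<dots> \<le> (1 + \<alpha>) * W\<^sup>2 + 2 * \<alpha> * k\<^sup>2"
  proof -
    have "2 * W * (\<alpha> * k) \<le> \<alpha> * W\<^sup>2 + \<alpha> * k\<^sup>2"
    proof -
      have "0 \<le> \<alpha> * (W - k)\<^sup>2" using a0 by auto
      then show ?thesis by (simp add: power2_eq_square algebra_simps)
    qed
    moreover have "\<alpha>\<^sup>2 * k\<^sup>2 \<le> \<alpha> * k\<^sup>2"
      using a0 a1 by (intro mult_right_mono) (auto simp: power2_eq_square)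
    ultimately show ?thesis by (simp add: power2_eq_square algebra_simps)
  qed
  also have "\<dots> \<le> (1 + \<alpha>) * ((1 + c1 * \<alpha>) * n\<^sup>2 + c1 * \<alpha>) + 2 * \<alpha> * k\<^sup>2"
  proof -
    have "W\<^sup>2 \<le> ((1 + \<alpha> * L) * n + \<alpha> * H)\<^sup>2" using W W0 by (intro power_mono) auto
    also have "\<dots> = (1 + \<alpha> * L)\<^sup>2 * n\<^sup>2 + 2 * (1 + \<alpha> * L) * \<alpha> * H * n + \<alpha>\<^sup>2 * H\<^sup>2"
      by (simp add: power2_eq_square algebra_simps)
    also have "\<dots> \<le> (1 + \<alpha> * (2*L + L\<^sup>2)) * n\<^sup>2 + (1 + L) * \<alpha> * H * (1 + n\<^sup>2) + \<alpha> * H\<^sup>2"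
    proof -
      have e1: "(1 + \<alpha> * L)\<^sup>2 \<le> 1 + \<alpha> * (2*L + L\<^sup>2)"
      proof -
        have "\<alpha>\<^sup>2 * L\<^sup>2 \<le> \<alpha> * L\<^sup>2" using a0 a1 by (intro mult_right_mono) (auto simp: power2_eq_square)
        then show ?thesis by (simp add: power2_eq_square algebra_simps)
      qed
      have e2: "2 * (1 + \<alpha> * L) * \<alpha> * H * n \<le> (1 + L) * \<alpha> * H * (1 + n\<^sup>2)"
      proof -
        have "2 * n \<le> 1 + n\<^sup>2" using sum_squares_bound[of n 1] by (simp add: power2_eq_square algebra_simps)
        moreover have "1 + \<alpha> * L \<le> 1 + L" using a1 L by (simp add: mult_left_le_one_le)
        ultimately have "(1 + \<alpha> * L) * (2 * n) \<le> (1 + L) * (1 + n\<^sup>2)"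
          using a0 L n by (intro mult_mono) auto
        then have "(\<alpha> * H) * ((1 + \<alpha> * L) * (2 * n)) \<le> (\<alpha> * H) * ((1 + L) * (1 + n\<^sup>2))"
          using a0 H by (intro mult_left_mono) auto
        then show ?thesis by (simp add: algebra_simps)
      qed
      have e3: "\<alpha>\<^sup>2 * H\<^sup>2 \<le> \<alpha> * H\<^sup>2" using a0 a1 by (intro mult_right_mono) (auto simp: power2_eq_square)
      have "(1 + \<alpha> * L)\<^sup>2 * n\<^sup>2 \<le> (1 + \<alpha> * (2*L + L\<^sup>2)) * n\<^sup>2" using e1 by (intro mult_right_mono) auto
      with e2 e3 show ?thesis by linarith
    qed
    also have "\<dots> \<le> (1 + c1 * \<alpha>) * n\<^sup>2 + c1 * \<alpha>"
    proof -
      have "0 \<le> \<alpha> * H\<^sup>2 * n\<^sup>2" "0 \<le> \<alpha> * (2*L + L\<^sup>2)" using a0 L by auto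
      then show ?thesis by (simp add: c1_def algebra_simps)
    qed
    finally have "W\<^sup>2 \<le> (1 + c1 * \<alpha>) * n\<^sup>2 + c1 * \<alpha>" .
    then show ?thesis using a0 by (simp add: mult_left_mono)
  qed
  also have "\<dots> \<le> (1 + (1 + 2 * c1) * \<alpha>) * n\<^sup>2 + (1 + 2 * c1) * \<alpha> + 2 * \<alpha> * k\<^sup>2"
  proof -
    have "c1 * \<alpha>\<^sup>2 \<le> c1 * \<alpha>" using a0 a1 c1 by (intro mult_left_mono) (auto simp: power2_eq_square)
    moreover have "c1 * \<alpha>\<^sup>2 * n\<^sup>2 \<le> c1 * \<alpha> * n\<^sup>2" using \<open>c1 * \<alpha>\<^sup>2 \<le> c1 * \<alpha>\<close> by (intro mult_right_mono) auto
    moreover have "0 \<le> \<alpha> * n\<^sup>2" using a0 by auto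
    ultimately have "\<alpha> * (\<alpha> * c1) + \<alpha> * (\<alpha> * (c1 * (n * n))) \<le> \<alpha> * c1 + \<alpha> * (c1 * (n * n))"
      by (simp add: power2_eq_square algebra_simps)
    moreover have "0 \<le> \<alpha> * (c1 * (n * n))" "0 \<le> \<alpha> * c1" using a0 c1 by auto
    ultimately show ?thesis using a0 by (simp add: power2_eq_square algebra_simps)
  qed
  finally show ?thesis by (simp add: c1_def)
qed
theorem lemma3:
  fixes M :: "'w measure"
    and F :: "nat \<Rightarrow> 'w measure"
    and S :: "'s::metric_space set"
    and h :: "'d::euclidean_space \<Rightarrow> 's \<Rightarrow> 'd"
    and a :: "nat \<Rightarrow> real"
    and y :: "nat \<Rightarrow> 'w \<Rightarrow> 's"
    and x :: "nat \<Rightarrow> 'w \<Rightarrow> 'd"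
    and Mn :: "nat \<Rightarrow> 'w \<Rightarrow> 'd"
    and L K T :: real
  assumes S_compact: "compact S"
    and h_cont: "continuous_on (UNIV \<times> S) (\<lambda>(u, v). h u v)"
    and L_pos: "L > 0"
    and h_lip: "\<And>x1 x2 v. v \<in> S \<Longrightarrow> norm (h x1 v - h x2 v) \<le> L * norm (x1 - x2)"
    and a_pos: "\<And>n. a n > 0"
    and a_not_summable: "\<not> summable a"
    and a_sq_summable: "summable (\<lambda>n. (a n)\<^sup>2)"
    and a_le1: "\<And>n. a n \<le> 1"
    and prob: "prob_space M"
    and filt: "filtration (space M) F"
    and subalg: "\<And>n. subalgebra M (F n)"
    and y_meas: "\<And>n. y n \<in> borel_measurable (F n)"
    and y_in_S: "\<And>n \<omega>. \<omega> \<in> space M \<Longrightarrow> y n \<omega> \<in> S"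
    and x0_meas: "x 0 \<in> borel_measurable (F 0)"
    and Mn_meas: "\<And>n. Mn (Suc n) \<in> borel_measurable (F (Suc n))"
    and Mn_sq_int: "\<And>n. integrable M (\<lambda>\<omega>. (norm (Mn (Suc n) \<omega>))\<^sup>2)"
    and Mn_mds: "\<And>n i. i \<in> Basis \<Longrightarrow>
                   AE \<omega> in M. real_cond_exp M (F n) (\<lambda>\<omega>. Mn (Suc n) \<omega> \<bullet> i) \<omega> = 0"
    and K_pos: "K > 0"
    and Mn_var: "\<And>n. AE \<omega> in M. real_cond_exp M (F n) (\<lambda>\<omega>. (norm (Mn (Suc n) \<omega>))\<^sup>2) \<omega>
                          \<le> K * (1 + (norm (x n \<omega>))\<^sup>2)"
    and x_rec: "\<And>n \<omega>. \<omega> \<in> space M \<Longrightarrow>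
                   x (Suc n) \<omega> = x n \<omega> + a n *\<^sub>R (h (x n \<omega>) (y n \<omega>) + Mn (Suc n) \<omega>)"
    and T_pos: "T > 0"
  shows "(SUP t\<in>{0..}. \<integral>\<^sup>+ \<omega>. ennreal ((norm (sa_xhat a T x t \<omega>))\<^sup>2) \<partial>M) < \<infinity>"

proof -
  interpret P: prob_space M by (rule prob)
  interpret Fl: filtration "space M" F by (rule filt)
  have spF: "space (F n) = space M" for n using subalg[of n] by (simp add: subalgebra_def)
  have Fmono: "f \<in> borel_measurable (F k)" if "j \<le> k" "f \<in> borel_measurable (F j)" for j k and f :: "'w \<Rightarrow> 'b::topological_space"
  proof (rule measurable_from_subalg[OF _ that(2)])
    show "subalgebra (F k) (F j)" unfolding subalgebra_def using Fl.sets_F_mono[OF that(1)] spF by auto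
  qed
  have xF: "x j \<in> borel_measurable (F j)" for j
  proof (induction j)
    case 0 then show ?case by (rule x0_meas)
  next
    case (Suc j)
    have xj: "x j \<in> borel_measurable (F (Suc j))" by (rule Fmono[OF _ Suc]) simp
    have yj: "y j \<in> borel_measurable (F (Suc j))" by (rule Fmono[OF _ y_meas]) simp
    have hj: "(\<lambda>\<omega>. h (x j \<omega>) (y j \<omega>)) \<in> borel_measurable (F (Suc j))"
      by (rule meas_h_comp[OF h_cont h_lip xj yj]) (auto simp: spF y_in_S)
    have "(\<lambda>\<omega>. x j \<omega> + a j *\<^sub>R (h (x j \<omega>) (y j \<omega>) + Mn (Suc j) \<omega>)) \<in> borel_measurable (F (Suc j))"
      using xj hj Mn_meas[of j] by measurable
    then show ?case by (rule measurable_cong[THEN iffD1, rotated]) (simp add: spF x_rec)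
  qed
  have xM[measurable]: "x j \<in> borel_measurable M" for j by (rule measurable_from_subalg[OF subalg xF])
  have MnM[measurable]: "Mn (Suc j) \<in> borel_measurable M" for j by (rule measurable_from_subalg[OF subalg Mn_meas])
  obtain mm where Tm: "\<And>n. sa_T a T n = sa_time a (mm n)"
    and Tge: "\<And>n. sa_T a T n + T \<le> sa_T a T (Suc n)"
    and Tle: "\<And>n. sa_T a T (Suc n) \<le> sa_T a T n + T + 1"
    using sa_T_props[OF a_pos a_not_summable a_le1 T_pos] by metis
  have tsm: "strict_mono (sa_time a)" by (rule sa_time_mono[OF a_pos])
  define r where "r n \<omega> = max (norm (x (mm n) \<omega>)) 1" for n \<omega>
  have r_eq: "sa_r a T x n \<omega> = r n \<omega>" for n \<omega>
    by (simp add: sa_r_def r_def Tm sa_xbar_time[OF a_pos])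
  have r1: "1 \<le> r n \<omega>" for n \<omega> by (simp add: r_def)
  define E where "E n j = (\<integral>\<^sup>+\<omega>. ennreal ((norm (x j \<omega>))\<^sup>2 / (r n \<omega>)\<^sup>2) \<partial>M)" for n j
  obtain H where H0: "0 \<le> H" and Hb: "\<And>v. v \<in> S \<Longrightarrow> norm (h 0 v) \<le> H"
  proof -
    have "continuous_on S (h 0)"
    proof -
      have "continuous_on S ((\<lambda>(u, v). h u v) \<circ> (\<lambda>v. (0, v)))"
        by (rule continuous_on_compose[OF _ continuous_on_subset[OF h_cont]])
           (auto intro!: continuous_intros)
      then show ?thesis by (simp add: o_def)
    qed
    then have "compact (h 0 ` S)" using S_compact by (rule compact_continuous_image)
    then obtain B where "B > 0" "\<And>z. z \<in> h 0 ` S \<Longrightarrow> norm z \<le> B"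
      using compact_imp_bounded bounded_pos by metis
    then show ?thesis using that[of B] by auto
  qed
  define c where "c = 1 + 2 * (2*L + L\<^sup>2 + (1+L)*H + H\<^sup>2)"
  define C where "C = c + 2 * K"
  have c0: "0 \<le> c" unfolding c_def using L_pos H0 by auto
  have C0: "0 \<le> C" unfolding C_def using c0 K_pos by auto
  have onestep: "E n (Suc j) \<le> ennreal (1 + c * a j) * E n j + ennreal (c * a j)
                + ennreal (2 * a j) * (ennreal K + ennreal K * E n j)"
    if j: "mm n \<le> j" for n j
  proof -
    let ?rr = "r n"
    define A where "A \<omega> = (norm (x j \<omega>))\<^sup>2 / (?rr \<omega>)\<^sup>2" for \<omega>
    define Bm where "Bm \<omega> = (norm (Mn (Suc j) \<omega>))\<^sup>2 / (?rr \<omega>)\<^sup>2" for \<omega>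
    have A0: "0 \<le> A \<omega>" for \<omega> by (simp add: A_def)
    have B0': "0 \<le> Bm \<omega>" for \<omega> by (simp add: Bm_def)
    have aj: "0 < a j" "a j \<le> 1" by (rule a_pos, rule a_le1)
    have ptw: "(norm (x (Suc j) \<omega>))\<^sup>2 / (?rr \<omega>)\<^sup>2 \<le> (1 + c * a j) * A \<omega> + c * a j + 2 * a j * Bm \<omega>"
      if \<omega>: "\<omega> \<in> space M" for \<omega>
    proof -
      have rp: "0 < ?rr \<omega>" using r1[of n \<omega>] by simp
      define hv where "hv = h (x j \<omega>) (y j \<omega>)"
      have yS: "y j \<omega> \<in> S" using y_in_S[OF \<omega>] .
      have hb: "norm hv \<le> H + L * norm (x j \<omega>)"
      proof -
        have "norm hv \<le> norm (h 0 (y j \<omega>)) + norm (hv - h 0 (y j \<omega>))"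
          by (metis add.commute diff_add_cancel norm_triangle_ineq)
        also have "\<dots> \<le> H + L * norm (x j \<omega> - 0)"
          using Hb[OF yS] h_lip[OF yS, of "x j \<omega>" 0] unfolding hv_def by (intro add_mono) auto
        finally show ?thesis by simp
      qed
      have W1: "norm (x j \<omega> + a j *\<^sub>R hv) \<le> (1 + a j * L) * norm (x j \<omega>) + a j * H"
      proof -
        have "norm (x j \<omega> + a j *\<^sub>R hv) \<le> norm (x j \<omega>) + a j * norm hv"
          using norm_triangle_ineq[of "x j \<omega>" "a j *\<^sub>R hv"] aj by simp
        also have "\<dots> \<le> norm (x j \<omega>) + a j * (H + L * norm (x j \<omega>))"
          using hb aj by (intro add_left_mono mult_left_mono) auto
        finally show ?thesis by (simp add: algebra_simps)
      qed
      have W2: "norm (x j \<omega> + a j *\<^sub>R hv) / ?rr \<omega> \<le> (1 + a j * L) * (norm (x j \<omega>) / ?rr \<omega>) + a j * H"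
      proof -
        have "norm (x j \<omega> + a j *\<^sub>R hv) / ?rr \<omega> \<le> ((1 + a j * L) * norm (x j \<omega>) + a j * H) / ?rr \<omega>"
          using W1 rp by (intro divide_right_mono) auto
        also have "\<dots> = (1 + a j * L) * (norm (x j \<omega>) / ?rr \<omega>) + (a j * H) / ?rr \<omega>"
          by (simp add: add_divide_distrib)
        also have "(a j * H) / ?rr \<omega> \<le> a j * H"
        proof -
          have "0 \<le> a j * H" using aj H0 by simp
          then have "a j * H \<le> a j * H * ?rr \<omega>" using r1[of n \<omega>] by (simp add: mult_le_cancel_left1)
          then show ?thesis using rp by (simp add: divide_le_eq)
        qed
        finally show ?thesis by simp
      qed
      have Q1: "norm (x (Suc j) \<omega>) / ?rr \<omega> \<le> norm (x j \<omega> + a j *\<^sub>R hv) / ?rr \<omega> + a j * (norm (Mn (Suc j) \<omega>) / ?rr \<omega>)"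
      proof -
        have "x (Suc j) \<omega> = (x j \<omega> + a j *\<^sub>R hv) + a j *\<^sub>R Mn (Suc j) \<omega>"
          using x_rec[OF \<omega>] by (simp add: hv_def scaleR_add_right)
        then have "norm (x (Suc j) \<omega>) \<le> norm (x j \<omega> + a j *\<^sub>R hv) + a j * norm (Mn (Suc j) \<omega>)"
          using norm_triangle_ineq[of "x j \<omega> + a j *\<^sub>R hv" "a j *\<^sub>R Mn (Suc j) \<omega>"] aj by simp
        then have "norm (x (Suc j) \<omega>) / ?rr \<omega> \<le> (norm (x j \<omega> + a j *\<^sub>R hv) + a j * norm (Mn (Suc j) \<omega>)) / ?rr \<omega>"
          using rp by (intro divide_right_mono) auto
        then show ?thesis by (simp add: add_divide_distrib)
      qed
      have "(norm (x (Suc j) \<omega>) / ?rr \<omega>)\<^sup>2 \<le> (1 + c * a j) * (norm (x j \<omega>) / ?rr \<omega>)\<^sup>2 + c * a j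
              + 2 * a j * (norm (Mn (Suc j) \<omega>) / ?rr \<omega>)\<^sup>2"
        unfolding c_def
        by (rule real_step[OF aj(1) aj(2) L_pos H0 _ _ _ W2 _ Q1]) (use rp in auto)
      then show ?thesis by (simp add: A_def Bm_def power_divide)
    qed
    have pte: "ennreal ((norm (x (Suc j) \<omega>))\<^sup>2 / (?rr \<omega>)\<^sup>2)
        \<le> ennreal (1 + c * a j) * ennreal (A \<omega>) + ennreal (c * a j) + ennreal (2 * a j) * ennreal (Bm \<omega>)"
      if \<omega>: "\<omega> \<in> space M" for \<omega>
    proof -
      have "ennreal ((norm (x (Suc j) \<omega>))\<^sup>2 / (?rr \<omega>)\<^sup>2) \<le> ennreal ((1 + c * a j) * A \<omega> + c * a j + 2 * a j * Bm \<omega>)"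
        by (rule ennreal_leI) (rule ptw[OF \<omega>])
      also have "\<dots> = ennreal ((1 + c * a j) * A \<omega>) + ennreal (c * a j) + ennreal (2 * a j * Bm \<omega>)"
      proof -
        have n1: "0 \<le> (1 + c * a j) * A \<omega>" using c0 aj A0[of \<omega>] by simp
        have n2: "0 \<le> c * a j" using c0 aj by simp
        have n3: "0 \<le> 2 * a j * Bm \<omega>" using aj B0'[of \<omega>] by simp
        show ?thesis by (simp only: ennreal_plus[OF add_nonneg_nonneg[OF n1 n2] n3] ennreal_plus[OF n1 n2])
      qed
      also have "\<dots> = ennreal (1 + c * a j) * ennreal (A \<omega>) + ennreal (c * a j) + ennreal (2 * a j) * ennreal (Bm \<omega>)"
        using c0 aj A0[of \<omega>] B0'[of \<omega>] by (simp add: ennreal_mult)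
      finally show ?thesis .
    qed
    have [measurable]: "(\<lambda>\<omega>. r n \<omega>) \<in> borel_measurable M" unfolding r_def by measurable
    have Am[measurable]: "(\<lambda>\<omega>. ennreal (A \<omega>)) \<in> borel_measurable M" unfolding A_def by measurable
    have Bmm[measurable]: "(\<lambda>\<omega>. ennreal (Bm \<omega>)) \<in> borel_measurable M" unfolding Bm_def by measurable
    have "E n (Suc j) \<le> (\<integral>\<^sup>+\<omega>. ennreal (1 + c * a j) * ennreal (A \<omega>) + ennreal (c * a j) + ennreal (2 * a j) * ennreal (Bm \<omega>) \<partial>M)"
      unfolding E_def by (rule nn_integral_mono) (rule pte)
    also have "\<dots> = ennreal (1 + c * a j) * E n j + ennreal (c * a j) + ennreal (2 * a j) * (\<integral>\<^sup>+\<omega>. ennreal (Bm \<omega>) \<partial>M)"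
    proof -
      have "(\<integral>\<^sup>+\<omega>. ennreal (1 + c * a j) * ennreal (A \<omega>) + ennreal (c * a j) + ennreal (2 * a j) * ennreal (Bm \<omega>) \<partial>M)
          = (\<integral>\<^sup>+\<omega>. ennreal (1 + c * a j) * ennreal (A \<omega>) + ennreal (c * a j) \<partial>M) + (\<integral>\<^sup>+\<omega>. ennreal (2 * a j) * ennreal (Bm \<omega>) \<partial>M)"
        by (rule nn_integral_add) measurable
      also have "(\<integral>\<^sup>+\<omega>. ennreal (1 + c * a j) * ennreal (A \<omega>) + ennreal (c * a j) \<partial>M)
          = (\<integral>\<^sup>+\<omega>. ennreal (1 + c * a j) * ennreal (A \<omega>) \<partial>M) + (\<integral>\<^sup>+\<omega>. ennreal (c * a j) \<partial>M)"
        by (rule nn_integral_add) measurable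
      also have "(\<integral>\<^sup>+\<omega>. ennreal (1 + c * a j) * ennreal (A \<omega>) \<partial>M) = ennreal (1 + c * a j) * E n j"
        unfolding E_def A_def by (rule nn_integral_cmult) measurable
      also have "(\<integral>\<^sup>+\<omega>. ennreal (c * a j) \<partial>M) = ennreal (c * a j)"
        using P.emeasure_space_1 by simp
      also have "(\<integral>\<^sup>+\<omega>. ennreal (2 * a j) * ennreal (Bm \<omega>) \<partial>M) = ennreal (2 * a j) * (\<integral>\<^sup>+\<omega>. ennreal (Bm \<omega>) \<partial>M)"
        by (rule nn_integral_cmult) measurable
      finally show ?thesis .
    qed
    also have "(\<integral>\<^sup>+\<omega>. ennreal (Bm \<omega>) \<partial>M) \<le> ennreal K + ennreal K * E n j"
    proof -
      have xmF: "x (mm n) \<in> borel_measurable (F j)" by (rule Fmono[OF j xF])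
      have gm: "(\<lambda>\<omega>. 1 / (r n \<omega>)\<^sup>2) \<in> borel_measurable (F j)" unfolding r_def using xmF by measurable
      have nb: "(\<integral>\<^sup>+\<omega>. ennreal (1 / (r n \<omega>)\<^sup>2 * (norm (Mn (Suc j) \<omega>))\<^sup>2) \<partial>M)
          \<le> (\<integral>\<^sup>+\<omega>. ennreal (1 / (r n \<omega>)\<^sup>2 * (K * (1 + (norm (x j \<omega>))\<^sup>2))) \<partial>M)"
      proof (rule noise_bound[OF prob subalg gm])
        fix \<omega> show "0 \<le> 1 / (r n \<omega>)\<^sup>2 \<and> 1 / (r n \<omega>)\<^sup>2 \<le> 1" using r1[of n \<omega>]
          by (simp add: divide_le_eq_1 one_le_power)
      next
        show "(\<lambda>\<omega>. (norm (Mn (Suc j) \<omega>))\<^sup>2) \<in> borel_measurable M" by measurable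
      next
        show "(\<lambda>\<omega>. K * (1 + (norm (x j \<omega>))\<^sup>2)) \<in> borel_measurable M" by measurable
      qed (use Mn_sq_int Mn_var in auto)
      have "(\<integral>\<^sup>+\<omega>. ennreal (Bm \<omega>) \<partial>M) = (\<integral>\<^sup>+\<omega>. ennreal (1 / (r n \<omega>)\<^sup>2 * (norm (Mn (Suc j) \<omega>))\<^sup>2) \<partial>M)"
        by (simp add: Bm_def)
      also have "\<dots> \<le> (\<integral>\<^sup>+\<omega>. ennreal (1 / (r n \<omega>)\<^sup>2 * (K * (1 + (norm (x j \<omega>))\<^sup>2))) \<partial>M)" by (rule nb)
      also have "\<dots> \<le> (\<integral>\<^sup>+\<omega>. ennreal K + ennreal K * ennreal (A \<omega>) \<partial>M)"
      proof (rule nn_integral_mono)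
        fix \<omega>
        have rp: "1 \<le> (r n \<omega>)\<^sup>2" using r1[of n \<omega>] by (simp add: one_le_power)
        have "1 / (r n \<omega>)\<^sup>2 * (K * (1 + (norm (x j \<omega>))\<^sup>2)) = K * (1 / (r n \<omega>)\<^sup>2) + K * A \<omega>"
          by (simp add: A_def field_simps add_divide_distrib)
        also have "\<dots> \<le> K + K * A \<omega>"
        proof -
          have "K \<le> K * (r n \<omega>)\<^sup>2" using rp K_pos by (simp add: mult_le_cancel_left1)
          then have "K / (r n \<omega>)\<^sup>2 \<le> K" using rp K_pos by (simp add: divide_le_eq)
          then show ?thesis by simp
        qed
        finally have "ennreal (1 / (r n \<omega>)\<^sup>2 * (K * (1 + (norm (x j \<omega>))\<^sup>2))) \<le> ennreal (K + K * A \<omega>)"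
          by (rule ennreal_leI)
        also have "\<dots> = ennreal K + ennreal K * ennreal (A \<omega>)"
        proof -
          have n1: "0 \<le> K" using K_pos by simp
          have n2: "0 \<le> K * A \<omega>" using K_pos A0[of \<omega>] by simp
          show ?thesis by (simp only: ennreal_plus[OF n1 n2] ennreal_mult[OF n1 A0])
        qed
        finally show "ennreal (1 / (r n \<omega>)\<^sup>2 * (K * (1 + (norm (x j \<omega>))\<^sup>2))) \<le> ennreal K + ennreal K * ennreal (A \<omega>)" .
      qed
      also have "\<dots> = (\<integral>\<^sup>+\<omega>. ennreal K \<partial>M) + (\<integral>\<^sup>+\<omega>. ennreal K * ennreal (A \<omega>) \<partial>M)"
        by (rule nn_integral_add) measurable
      also have "\<dots> = ennreal K + ennreal K * E n j"
        using P.emeasure_space_1 unfolding E_def A_def by (simp add: nn_integral_cmult)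
      finally show ?thesis .
    qed
    then have "ennreal (1 + c * a j) * E n j + ennreal (c * a j) + ennreal (2 * a j) * (\<integral>\<^sup>+\<omega>. ennreal (Bm \<omega>) \<partial>M)
        \<le> ennreal (1 + c * a j) * E n j + ennreal (c * a j) + ennreal (2 * a j) * (ennreal K + ennreal K * E n j)"
      by (intro add_left_mono mult_left_mono) auto
    finally show ?thesis .
  qed
  have gron: "E n j \<le> ennreal (2 * exp (C * (sa_time a j - sa_time a (mm n))) - 1)"
    if j: "mm n \<le> j" for n j
    using j
  proof (induction j rule: dec_induct)
    case base
    have "E n (mm n) \<le> (\<integral>\<^sup>+\<omega>. ennreal 1 \<partial>M)"
      unfolding E_def
    proof (rule nn_integral_mono)
      fix \<omega>
      have "norm (x (mm n) \<omega>) \<le> r n \<omega>" by (simp add: r_def)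
      then have "(norm (x (mm n) \<omega>))\<^sup>2 \<le> (r n \<omega>)\<^sup>2" by (intro power_mono) auto
      then have "(norm (x (mm n) \<omega>))\<^sup>2 / (r n \<omega>)\<^sup>2 \<le> 1" using r1[of n \<omega>] by (simp add: divide_le_eq_1)
      then show "ennreal ((norm (x (mm n) \<omega>))\<^sup>2 / (r n \<omega>)\<^sup>2) \<le> ennreal 1" by (rule ennreal_leI)
    qed
    also have "\<dots> = 1" using P.emeasure_space_1 by simp
    finally show ?case by simp
  next
    case (step j)
    define G where "G = 2 * exp (C * (sa_time a j - sa_time a (mm n))) - 1"
    have tj: "sa_time a (mm n) \<le> sa_time a j" using step.hyps(1) tsm by (simp add: strict_mono_less_eq)
    have G1: "1 \<le> G"
    proof -
      have "0 \<le> C * (sa_time a j - sa_time a (mm n))" using C0 tj by simp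
      then have "1 \<le> exp (C * (sa_time a j - sa_time a (mm n)))" by simp
      then show ?thesis unfolding G_def by simp
    qed
    have aj: "0 < a j" by (rule a_pos)
    have IH: "E n j \<le> ennreal G" using step.IH by (simp add: G_def)
    have "E n (Suc j) \<le> ennreal (1 + c * a j) * E n j + ennreal (c * a j)
                + ennreal (2 * a j) * (ennreal K + ennreal K * E n j)"
      by (rule onestep[OF step.hyps(1)])
    also have "\<dots> \<le> ennreal (1 + c * a j) * ennreal G + ennreal (c * a j)
                + ennreal (2 * a j) * (ennreal K + ennreal K * ennreal G)"
      using IH by (intro add_mono mult_left_mono order_refl) auto
    also have "\<dots> = ennreal ((1 + c * a j) * G + c * a j + 2 * a j * (K + K * G))"
      using c0 aj K_pos G1
      by (simp add: ennreal_plus[symmetric] ennreal_mult[symmetric] del: ennreal_plus)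
    also have "\<dots> \<le> ennreal (2 * exp (C * (sa_time a (Suc j) - sa_time a (mm n))) - 1)"
    proof (rule ennreal_leI)
      have "(1 + c * a j) * G + c * a j + 2 * a j * (K + K * G) = (1 + C * a j) * (G + 1) - 1"
        by (simp add: C_def algebra_simps)
      also have "\<dots> \<le> exp (C * a j) * (G + 1) - 1"
        using G1 exp_ge_add_one_self[of "C * a j"] by (simp add: mult_right_mono add.commute)
      also have "\<dots> = 2 * exp (C * (sa_time a (Suc j) - sa_time a (mm n))) - 1"
        by (simp add: G_def sa_time_Suc algebra_simps mult_exp_exp)
      finally show "(1 + c * a j) * G + c * a j + 2 * a j * (K + K * G)
          \<le> 2 * exp (C * (sa_time a (Suc j) - sa_time a (mm n))) - 1" .
    qed
    finally show ?case .
  qed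
  define B0 where "B0 = 2 * exp (C * (T + 1))"
  have Eb: "E n j \<le> ennreal B0" if "mm n \<le> j" "j \<le> mm (Suc n)" for n j
  proof -
    have "sa_time a j \<le> sa_time a (mm (Suc n))" using that(2) tsm by (simp add: strict_mono_less_eq)
    moreover have "sa_time a (mm (Suc n)) \<le> sa_time a (mm n) + T + 1" using Tle[of n] unfolding Tm .
    ultimately have "sa_time a j - sa_time a (mm n) \<le> T + 1" by linarith
    then have "C * (sa_time a j - sa_time a (mm n)) \<le> C * (T + 1)" using C0 by (rule mult_left_mono)
    then have "exp (C * (sa_time a j - sa_time a (mm n))) \<le> exp (C * (T + 1))" by simp
    then have "2 * exp (C * (sa_time a j - sa_time a (mm n))) - 1 \<le> B0" unfolding B0_def by linarith
    then have "ennreal (2 * exp (C * (sa_time a j - sa_time a (mm n))) - 1) \<le> ennreal B0"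
      by (rule ennreal_leI)
    with gron[OF that(1)] show ?thesis by order
  qed
  have pt: "(\<integral>\<^sup>+ \<omega>. ennreal ((norm (sa_xhat a T x t \<omega>))\<^sup>2) \<partial>M) \<le> ennreal (2 * B0)" if t: "t \<in> {0..}" for t
  proof -
    define n where "n = sa_block a T t"
    define k where "k = sa_idx a t"
    have t0: "0 \<le> t" using t by simp
    have bl: "sa_T a T n \<le> t \<and> t < sa_T a T (Suc n)"
      unfolding n_def by (rule sa_block[OF a_pos a_not_summable a_le1 T_pos t0])
    have ix: "sa_time a k \<le> t \<and> t < sa_time a (Suc k)"
      unfolding k_def by (rule sa_idx[OF a_pos a_not_summable t0])
    have k1: "mm n \<le> k"
    proof -
      have "sa_time a (mm n) < sa_time a (Suc k)" using bl ix Tm by (metis order.strict_trans1)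
      then show ?thesis using tsm by (simp add: strict_mono_less)
    qed
    have k2: "Suc k \<le> mm (Suc n)"
    proof -
      have "sa_time a k < sa_time a (mm (Suc n))" using bl ix Tm by (metis order.strict_trans1)
      then show ?thesis using tsm by (simp add: strict_mono_less Suc_leI)
    qed
    define \<theta> where "\<theta> = (t - sa_time a k) / a k"
    have th0: "0 \<le> \<theta>" using ix a_pos[of k] by (simp add: \<theta>_def)
    have th1: "\<theta> \<le> 1" using ix a_pos[of k] by (simp add: \<theta>_def sa_time_Suc)
    have ptw: "(norm (sa_xhat a T x t \<omega>))\<^sup>2 \<le> (norm (x k \<omega>))\<^sup>2 / (r n \<omega>)\<^sup>2 + (norm (x (Suc k) \<omega>))\<^sup>2 / (r n \<omega>)\<^sup>2" for \<omega>
    proof -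
      have xb: "sa_xbar a x t \<omega> = (1 - \<theta>) *\<^sub>R x k \<omega> + \<theta> *\<^sub>R x (Suc k) \<omega>"
      proof -
        have "sa_xbar a x t \<omega> = x k \<omega> + \<theta> *\<^sub>R (x (Suc k) \<omega> - x k \<omega>)"
          unfolding sa_xbar_def k_def[symmetric] \<theta>_def[symmetric] Let_def by (rule refl)
        also have "\<dots> = (1 - \<theta>) *\<^sub>R x k \<omega> + \<theta> *\<^sub>R x (Suc k) \<omega>"
          by (simp add: scaleR_diff_left scaleR_diff_right)
        finally show ?thesis .
      qed
      have "norm (sa_xbar a x t \<omega>) \<le> (1 - \<theta>) * norm (x k \<omega>) + \<theta> * norm (x (Suc k) \<omega>)"
      proof -
        have "norm (sa_xbar a x t \<omega>) \<le> norm ((1 - \<theta>) *\<^sub>R x k \<omega>) + norm (\<theta> *\<^sub>R x (Suc k) \<omega>)"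
          unfolding xb by (rule norm_triangle_ineq)
        also have "\<dots> = (1 - \<theta>) * norm (x k \<omega>) + \<theta> * norm (x (Suc k) \<omega>)"
          using th0 th1 by simp
        finally show ?thesis .
      qed
      also have "\<dots> \<le> max (norm (x k \<omega>)) (norm (x (Suc k) \<omega>))"
      proof -
        let ?m = "max (norm (x k \<omega>)) (norm (x (Suc k) \<omega>))"
        have "(1 - \<theta>) * norm (x k \<omega>) \<le> (1 - \<theta>) * ?m" using th1 by (intro mult_left_mono) auto
        moreover have "\<theta> * norm (x (Suc k) \<omega>) \<le> \<theta> * ?m" using th0 by (intro mult_left_mono) auto
        ultimately have "(1 - \<theta>) * norm (x k \<omega>) + \<theta> * norm (x (Suc k) \<omega>) \<le> (1 - \<theta>) * ?m + \<theta> * ?m" by linarith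
        also have "\<dots> = ?m" by (simp add: algebra_simps)
        finally show ?thesis .
      qed
      finally have nb: "norm (sa_xbar a x t \<omega>) \<le> max (norm (x k \<omega>)) (norm (x (Suc k) \<omega>))" .
      have "(norm (sa_xbar a x t \<omega>))\<^sup>2 \<le> (max (norm (x k \<omega>)) (norm (x (Suc k) \<omega>)))\<^sup>2"
        using nb by (intro power_mono) auto
      also have "\<dots> \<le> (norm (x k \<omega>))\<^sup>2 + (norm (x (Suc k) \<omega>))\<^sup>2"
        by (simp add: max_def)
      finally have sq: "(norm (sa_xbar a x t \<omega>))\<^sup>2 \<le> (norm (x k \<omega>))\<^sup>2 + (norm (x (Suc k) \<omega>))\<^sup>2" .
      have "(norm (sa_xhat a T x t \<omega>))\<^sup>2 = (norm (sa_xbar a x t \<omega>))\<^sup>2 / (r n \<omega>)\<^sup>2"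
        using r1[of n \<omega>] by (simp add: sa_xhat_def r_eq n_def[symmetric] power_divide)
      also have "\<dots> \<le> ((norm (x k \<omega>))\<^sup>2 + (norm (x (Suc k) \<omega>))\<^sup>2) / (r n \<omega>)\<^sup>2"
        using sq by (intro divide_right_mono) auto
      finally show ?thesis by (simp add: add_divide_distrib)
    qed
    have "(\<integral>\<^sup>+ \<omega>. ennreal ((norm (sa_xhat a T x t \<omega>))\<^sup>2) \<partial>M)
        \<le> (\<integral>\<^sup>+ \<omega>. ennreal ((norm (x k \<omega>))\<^sup>2 / (r n \<omega>)\<^sup>2) + ennreal ((norm (x (Suc k) \<omega>))\<^sup>2 / (r n \<omega>)\<^sup>2) \<partial>M)"
    proof (rule nn_integral_mono)
      fix \<omega>
      have "ennreal ((norm (sa_xhat a T x t \<omega>))\<^sup>2) \<le> ennreal ((norm (x k \<omega>))\<^sup>2 / (r n \<omega>)\<^sup>2 + (norm (x (Suc k) \<omega>))\<^sup>2 / (r n \<omega>)\<^sup>2)"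
        by (rule ennreal_leI) (rule ptw)
      also have "\<dots> = ennreal ((norm (x k \<omega>))\<^sup>2 / (r n \<omega>)\<^sup>2) + ennreal ((norm (x (Suc k) \<omega>))\<^sup>2 / (r n \<omega>)\<^sup>2)"
        by (rule ennreal_plus) auto
      finally show "ennreal ((norm (sa_xhat a T x t \<omega>))\<^sup>2) \<le> ennreal ((norm (x k \<omega>))\<^sup>2 / (r n \<omega>)\<^sup>2) + ennreal ((norm (x (Suc k) \<omega>))\<^sup>2 / (r n \<omega>)\<^sup>2)" .
    qed
    also have "\<dots> = E n k + E n (Suc k)"
      unfolding E_def r_def by (rule nn_integral_add) measurable
    also have "\<dots> \<le> ennreal B0 + ennreal B0"
      using Eb[OF k1] Eb[of n "Suc k"] k1 k2 by (intro add_mono) auto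
    also have "\<dots> = ennreal (B0 + B0)" unfolding B0_def by (rule ennreal_plus[symmetric]) auto
    also have "\<dots> = ennreal (2 * B0)" by simp
    finally show ?thesis .
  qed
  have "(SUP t\<in>{0..}. \<integral>\<^sup>+ \<omega>. ennreal ((norm (sa_xhat a T x t \<omega>))\<^sup>2) \<partial>M) \<le> ennreal (2 * B0)"
    by (rule SUP_least) (rule pt)
  also have "\<dots> < \<infinity>" by simp
  finally show ?thesis .
qed

end
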